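(* If $T$ is a cop-win tree with infinite radius, then $\eta(T)$ is an infinite ordinal and $\rho(T)=\eta(T)+\omega$.
   Context: All graphs are simple and undirected, possibly infinite. For a vertex $v$ of a graph $G$, $N[v]$ denotes its closed neighbourhood. Define binary relations $\leq_\alpha$ on $V(G)$, for every ordinal $\alpha$, by transfinite recursion: $u\leq_0 v$ iff $u=v$; for $\alpha>0$, $u\leq_\alpha v$ iff for every $x\in N[u]$ there exist $y\in N[v]$ and an ordinal $\beta<\alpha$ with $x\leq_\beta y$. The CR-ordinal $\rho(G)$ is the least ordinal $\rho$ with $\leq_\rho=\leq_{\rho+1}$. A graph is cop-win if in the game of Cops and Robbers a single cop has a strategy guaranteeing capture of the robber; equivalently, $\leq_{\rho(G)}=V(G)\times V(G)$ (a tree is cop-win iff it has no ray). For a cop-win graph $G$ and $u,v\in V(G)$, let $\eta(u,v)$ be the least ordinal $\alpha$ with $u\leq_\alpha v$; let $\eta(v)$ be the least ordinal $\alpha$ such that $u\leq_\alpha v$ for all $u\in V(G)$; and let $\eta(G)=\min_{v\in V(G)}\eta(v)$. The radius of a tree is $\min_v\sup_u d(u,v)$ where $d$ is graph distance. *)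

theory Defs
  imports Main "HOL-Library.Extended_Nat"
begin

text \<open>Graphs: a simple undirected graph on the vertex type 'a is a symmetric irreflexive
  relation E (vertex set = UNIV).\<close>

definition simple_graph :: "('a \<Rightarrow> 'a \<Rightarrow> bool) \<Rightarrow> bool" where
  "simple_graph E \<longleftrightarrow> (\<forall>u v. E u v \<longrightarrow> E v u) \<and> (\<forall>u. \<not> E u u)"

definition cnbhd :: "('a \<Rightarrow> 'a \<Rightarrow> bool) \<Rightarrow> 'a \<Rightarrow> 'a set" where
  "cnbhd E v = insert v {u. E v u}"

fun is_walk :: "('a \<Rightarrow> 'a \<Rightarrow> bool) \<Rightarrow> 'a list \<Rightarrow> bool" where
  "is_walk E [] = False"
| "is_walk E [v] = True"
| "is_walk E (u # v # vs) = (E u v \<and> is_walk E (v # vs))"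

definition connected_graph :: "('a \<Rightarrow> 'a \<Rightarrow> bool) \<Rightarrow> bool" where
  "connected_graph E \<longleftrightarrow> (\<forall>u v. \<exists>p. is_walk E p \<and> hd p = u \<and> last p = v)"

definition acyclic_graph :: "('a \<Rightarrow> 'a \<Rightarrow> bool) \<Rightarrow> bool" where
  "acyclic_graph E \<longleftrightarrow> \<not> (\<exists>p. is_walk E p \<and> distinct p \<and> 3 \<le> length p \<and> E (last p) (hd p))"

definition tree :: "('a \<Rightarrow> 'a \<Rightarrow> bool) \<Rightarrow> bool" where
  "tree E \<longleftrightarrow> simple_graph E \<and> connected_graph E \<and> acyclic_graph E"

definition gdist :: "('a \<Rightarrow> 'a \<Rightarrow> bool) \<Rightarrow> 'a \<Rightarrow> 'a \<Rightarrow> nat" where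
  "gdist E u v = (LEAST n. \<exists>p. is_walk E p \<and> hd p = u \<and> last p = v \<and> length p = Suc n)"

definition radius :: "('a \<Rightarrow> 'a \<Rightarrow> bool) \<Rightarrow> enat" where
  "radius E = (INF v. SUP u. enat (gdist E u v))"

text \<open>Cops and Robbers with one cop.  c_i = sigma [r_0,...,r_(i-1)] is the cop's position
  after round i (c_0 = sigma []), r_i the robber's.  In round i+1 the cop moves (to a vertex of
  the closed neighbourhood), then the robber moves.\<close>

definition cop_win :: "('a \<Rightarrow> 'a \<Rightarrow> bool) \<Rightarrow> bool" where
  "cop_win E \<longleftrightarrow> (\<exists>\<sigma> :: 'a list \<Rightarrow> 'a.
     (\<forall>rs r. \<sigma> (rs @ [r]) \<in> cnbhd E (\<sigma> rs)) \<and>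
     (\<forall>r :: nat \<Rightarrow> 'a. (\<forall>i. r (Suc i) \<in> cnbhd E (r i)) \<longrightarrow>
        (\<exists>i. \<sigma> (map r [0..<i]) = r i \<or> \<sigma> (map r [0..<Suc i]) = r i)))"

text \<open>Ordinals are modelled by an arbitrary well-ordered type 'o (an initial segment of the
  ordinals).  The relations \<le>_\<alpha> are defined by transfinite recursion (as an inductive
  predicate, whose least fixed point is the unique solution of the well-founded recursion).\<close>

inductive crle :: "('a \<Rightarrow> 'a \<Rightarrow> bool) \<Rightarrow> 'o::wellorder \<Rightarrow> 'a \<Rightarrow> 'a \<Rightarrow> bool" for E where
  base: "(\<forall>\<beta>. \<alpha> \<le> \<beta>) \<Longrightarrow> crle E \<alpha> u u"
| step: "\<not> (\<forall>\<beta>. \<alpha> \<le> \<beta>) \<Longrightarrow>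
         (\<forall>x\<in>cnbhd E u. \<exists>y\<in>cnbhd E v. \<exists>\<beta><\<alpha>. crle E \<beta> x y) \<Longrightarrow> crle E \<alpha> u v"

definition osucc :: "'o::wellorder \<Rightarrow> 'o" where
  "osucc \<alpha> = (LEAST \<beta>. \<alpha> < \<beta>)"

definition cr_ordinal :: "('a \<Rightarrow> 'a \<Rightarrow> bool) \<Rightarrow> 'o::wellorder" where
  "cr_ordinal E = (LEAST \<alpha>. \<alpha> < osucc \<alpha> \<and> crle E \<alpha> = crle E (osucc \<alpha>))"

definition eta_vertex :: "('a \<Rightarrow> 'a \<Rightarrow> bool) \<Rightarrow> 'a \<Rightarrow> 'o::wellorder" where
  "eta_vertex E v = (LEAST \<alpha>. \<forall>u. crle E \<alpha> u v)"

definition eta_graph :: "('a \<Rightarrow> 'a \<Rightarrow> bool) \<Rightarrow> 'o::wellorder" where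
  "eta_graph E = (LEAST \<alpha>. \<alpha> \<in> range (eta_vertex E))"

definition omega_add :: "'o::wellorder \<Rightarrow> 'o" where
  "omega_add \<alpha> = (LEAST \<gamma>. \<forall>n. (osucc ^^ n) \<alpha> < \<gamma>)"

end

theory Submission
  imports Defs
begin


lemma walk_nonempty: "is_walk E p \<Longrightarrow> p \<noteq> []"
  by (cases p) auto

lemma walk_snoc: "is_walk E (xs @ [b]) \<longleftrightarrow> (xs = [] \<or> (is_walk E xs \<and> E (last xs) b))"
proof (induction xs)
  case Nil then show ?case by simp
next
  case (Cons a xs)
  then show ?case by (cases xs) auto
qed

lemma walk_Cons: "is_walk E (a # p) \<longleftrightarrow> (p = [] \<or> (E a (hd p) \<and> is_walk E p))"
  by (cases p) auto

lemma walk_app: "is_walk E p \<Longrightarrow> is_walk E q \<Longrightarrow> last p = hd q \<Longrightarrow> is_walk E (p @ tl q)"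
proof (induction p)
  case Nil then show ?case by simp
next
  case (Cons a p)
  show ?case
  proof (cases "p = []")
    case True
    then show ?thesis using Cons.prems by (cases q) auto
  next
    case False
    then have "is_walk E (p @ tl q)" using Cons by (auto simp: walk_Cons)
    then show ?thesis using Cons.prems False by (auto simp: walk_Cons)
  qed
qed

lemma walk_rev: "(\<And>u v. E u v \<Longrightarrow> E v u) \<Longrightarrow> is_walk E p \<Longrightarrow> is_walk E (rev p)"
proof (induction p)
  case Nil then show ?case by simp
next
  case (Cons a p)
  show ?case
  proof (cases "p = []")
    case True then show ?thesis by simp
  next
    case False
    then have "is_walk E (rev p)" "E a (hd p)" using Cons by (auto simp: walk_Cons)
    then show ?thesis using False Cons.prems(1) by (simp add: walk_snoc last_rev)
  qed
qed

lemma walk_map_upt: "is_walk E (map h [0..<Suc n]) \<longleftrightarrow> (\<forall>t<n. E (h t) (h (Suc t)))"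
proof (induction n)
  case 0 then show ?case by simp
next
  case (Suc n)
  have "map h [0..<Suc (Suc n)] = map h [0..<Suc n] @ [h (Suc n)]" by simp
  then have "is_walk E (map h [0..<Suc (Suc n)]) \<longleftrightarrow> is_walk E (map h [0..<Suc n]) \<and> E (h n) (h (Suc n))"
    by (simp add: walk_snoc last_map del: upt_Suc)
  then show ?case using Suc by (auto simp: less_Suc_eq)
qed




locale tgraph =
  fixes E :: "'a \<Rightarrow> 'a \<Rightarrow> bool"
  assumes sym: "E u v \<Longrightarrow> E v u" and irr: "\<not> E u u"
    and conn: "connected_graph E" and acyc: "acyclic_graph E"
begin

abbreviation d where "d \<equiv> gdist E"

lemma gdist_ex: "\<exists>p. is_walk E p \<and> hd p = u \<and> last p = v \<and> length p = Suc (d u v)"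
proof -
  obtain p where p: "is_walk E p" "hd p = u" "last p = v"
    using conn unfolding connected_graph_def by blast
  then have "length p = Suc (length p - 1)" using walk_nonempty by (cases p) auto
  with p have "\<exists>n p. is_walk E p \<and> hd p = u \<and> last p = v \<and> length p = Suc n" by blast
  then show ?thesis unfolding gdist_def by (rule LeastI_ex)
qed

lemma gdist_le: "is_walk E p \<Longrightarrow> hd p = u \<Longrightarrow> last p = v \<Longrightarrow> d u v \<le> length p - 1"
proof -
  assume p: "is_walk E p" "hd p = u" "last p = v"
  then have "length p = Suc (length p - 1)" using walk_nonempty by (cases p) auto
  with p show ?thesis unfolding gdist_def by (intro Least_le) blast
qed

lemma gdist_refl[simp]: "d u u = 0"
  using gdist_le[of "[u]" u u] by simp

lemma gdist_0: "d u v = 0 \<longleftrightarrow> u = v"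
proof
  assume "d u v = 0"
  then obtain p where "is_walk E p" "hd p = u" "last p = v" "length p = 1"
    using gdist_ex[of u v] by auto
  then show "u = v" by (cases p) auto
qed simp

lemma gdist_edge: "E u v \<Longrightarrow> d u v \<le> 1"
  using gdist_le[of "[u,v]" u v] by simp

lemma gdist_sym: "d u v = d v u"
proof -
  have "d v u \<le> d u v" for u v
  proof -
    obtain p where p: "is_walk E p" "hd p = u" "last p = v" "length p = Suc (d u v)"
      using gdist_ex by blast
    then have "is_walk E (rev p)" using walk_rev sym by blast
    moreover have "hd (rev p) = v" "last (rev p) = u" using p walk_nonempty
      by (auto simp: hd_rev last_rev)
    ultimately show ?thesis using gdist_le[of "rev p" v u] p by simp
  qed
  then show ?thesis by (metis le_antisym)
qed

lemma gdist_tri: "d u w \<le> d u v + d v w"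
proof -
  obtain p where p: "is_walk E p" "hd p = u" "last p = v" "length p = Suc (d u v)"
    using gdist_ex by blast
  obtain q where q: "is_walk E q" "hd q = v" "last q = w" "length q = Suc (d v w)"
    using gdist_ex by blast
  have w: "is_walk E (p @ tl q)" using walk_app[OF p(1) q(1)] p(3) q(2) by simp
  have "p \<noteq> []" using p(1) walk_nonempty by blast
  then have "hd (p @ tl q) = u" using p by simp
  moreover have "last (p @ tl q) = w" using p q walk_nonempty
    by (cases q) (auto)
  ultimately show ?thesis using gdist_le[OF w] p q by simp
qed

lemma gdist_nbr: "E u x \<Longrightarrow> d u v \<le> Suc (d x v)"
  using gdist_tri[of u v x] gdist_edge[of u x] by simp

lemma gdist_nbr': "x \<in> cnbhd E u \<Longrightarrow> d u v \<le> Suc (d x v)"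
  using gdist_nbr[of u x v] by (auto simp: cnbhd_def)

lemma gdist_step: "d u v = Suc k \<Longrightarrow> \<exists>u'. E u u' \<and> d u' v = k"
proof -
  assume k: "d u v = Suc k"
  obtain p where p: "is_walk E p" "hd p = u" "last p = v" "length p = Suc (Suc k)"
    using gdist_ex[of u v] k by auto
  then obtain u' r where pr: "p = u # u' # r" by (cases p; cases "tl p") auto
  then have "E u u'" "is_walk E (u' # r)" using p by auto
  moreover have "last (u' # r) = v" using p pr by auto
  ultimately have "d u' v \<le> k" using gdist_le[of "u'#r" u' v] p pr by auto
  moreover have "Suc k \<le> Suc (d u' v)" using gdist_nbr[OF \<open>E u u'\<close>, of v] k by simp
  ultimately show ?thesis using \<open>E u u'\<close> by auto
qed

end



context tgraph begin

lemma geo_seq: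
  "\<exists>f. f 0 = x \<and> (\<forall>t\<le>d x a. d (f t) a = d x a - t) \<and> (\<forall>t<d x a. E (f t) (f (Suc t)))"
proof -
  define stp where "stp z = (SOME z'. E z z' \<and> d z' a = d z a - 1)" for z
  have stp: "E z (stp z) \<and> d (stp z) a = d z a - 1" if nz: "d z a \<noteq> 0" for z
  proof -
    obtain k where "d z a = Suc k" using nz by (cases "d z a") auto
    then obtain z' where "E z z' \<and> d z' a = k" using gdist_step by blast
    then have "\<exists>z'. E z z' \<and> d z' a = d z a - 1" using \<open>d z a = Suc k\<close> by auto
    then show ?thesis unfolding stp_def by (rule someI_ex)
  qed
  define f where "f t = (stp ^^ t) x" for t
  have A: "t \<le> d x a \<Longrightarrow> d (f t) a = d x a - t" for t
  proof (induction t)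
    case 0 then show ?case by (simp add: f_def)
  next
    case (Suc t)
    then have "d (f t) a \<noteq> 0" by simp
    then show ?case using stp[of "f t"] Suc by (simp add: f_def)
  qed
  have B: "t < d x a \<Longrightarrow> E (f t) (f (Suc t))" for t
    using stp[of "f t"] A[of t] by (simp add: f_def)
  show ?thesis using A B by (intro exI[of _ f]) (simp add: f_def)
qed

lemma cyc:
  assumes f: "\<forall>t\<le>k. d (f t) a = k - t" "\<forall>t<k. E (f t) (f (Suc t))"
    and g: "\<forall>t\<le>k. d (g t) a = k - t" "\<forall>t<k. E (g t) (g (Suc t))"
    and ne: "f 0 \<noteq> g 0"
  shows "\<exists>L. is_walk E L \<and> distinct L \<and> hd L = f 0 \<and> last L = g 0 \<and> 3 \<le> length L
            \<and> (\<forall>z\<in>set L. d z a \<le> k)"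
proof -
  have fk: "f k = a" "g k = a" using f g gdist_0 by auto
  have eqi: "f j = g i \<Longrightarrow> j \<le> k \<Longrightarrow> i \<le> k \<Longrightarrow> i = j" for i j
    using f(1) g(1) by (metis diff_diff_cancel)
  define j where "j = (LEAST j. \<exists>i\<le>k. f j = g i)"
  have ex: "\<exists>i\<le>k. f k = g i" using fk by auto
  have jk: "j \<le> k" unfolding j_def using ex by (rule Least_le)
  have "\<exists>i\<le>k. f j = g i" unfolding j_def using ex by (rule LeastI)
  then have fgj: "f j = g j" using eqi jk by blast
  have jmin: "s < j \<Longrightarrow> f s \<noteq> g s" for s
  proof
    assume "s < j" "f s = g s"
    then have "\<exists>i\<le>k. f s = g i" using jk by (intro exI[of _ s]) simp
    then have "j \<le> s" unfolding j_def by (rule Least_le)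
    with \<open>s < j\<close> show False by simp
  qed
  have j0: "j \<noteq> 0"
  proof
    assume "j = 0" then show False using fgj ne by simp
  qed
  define h where "h t = (if t \<le> j then f t else g (2*j - t))" for t
  define L where "L = map h [0..<Suc (2*j)]"
  have dh: "t \<le> 2*j \<Longrightarrow> d (h t) a = (if t \<le> j then k - t else k - (2*j - t))" for t
    using f(1) g(1) jk by (auto simp: h_def)
  have walk: "is_walk E L" unfolding L_def walk_map_upt
  proof (intro allI impI)
    fix t assume t: "t < 2*j"
    consider "t < j" | "t = j" | "j < t" by linarith
    then show "E (h t) (h (Suc t))"
    proof cases
      case 1 then show ?thesis using f(2) jk by (auto simp: h_def)
    next
      case 2
      then have "h t = g (Suc (j - 1))" "h (Suc t) = g (j - 1)" using fgj j0 by (auto simp: h_def)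
      moreover have "j - 1 < k" using jk j0 by simp
      then have "E (g (j-1)) (g (Suc (j-1)))" using g(2) by blast
      ultimately show ?thesis using sym by auto
    next
      case 3
      then have "h t = g (Suc (2*j - Suc t))" "h (Suc t) = g (2*j - Suc t)" using t
        by (auto simp: h_def Suc_diff_Suc)
      moreover have "E (g (2*j - Suc t)) (g (Suc (2*j - Suc t)))" using g(2) jk t 3 by auto
      ultimately show ?thesis using sym by auto
    qed
  qed
  have dist: "distinct L" unfolding L_def distinct_map
  proof (intro conjI inj_onI)
    fix t1 t2 assume t1: "t1 \<in> set [0..<Suc (2*j)]" and t2: "t2 \<in> set [0..<Suc (2*j)]"
      and eq: "h t1 = h t2"
    have t1': "t1 \<le> 2*j" and t2': "t2 \<le> 2*j" using t1 t2 by auto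
    have "d (h t1) a = d (h t2) a" using eq by simp
    then have D: "(if t1 \<le> j then k - t1 else k - (2*j - t1)) = (if t2 \<le> j then k - t2 else k - (2*j - t2))"
      using dh t1' t2' by simp
    show "t1 = t2"
    proof (cases "t1 \<le> j"; cases "t2 \<le> j")
      assume "t1 \<le> j" "t2 \<le> j" then show ?thesis using D jk by auto
    next
      assume "\<not> t1 \<le> j" "\<not> t2 \<le> j" then show ?thesis using D jk t1' t2' by auto
    next
      assume a: "t1 \<le> j" "\<not> t2 \<le> j"
      then have "t1 = 2*j - t2" using D jk t2' by auto
      moreover have "f t1 = g (2*j - t2)" using eq a by (simp add: h_def)
      moreover have "t1 < j" using calculation(1) a(2) t2' by arith
      ultimately show ?thesis using jmin[of t1] by simp
    next
      assume a: "\<not> t1 \<le> j" "t2 \<le> j"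
      then have "t2 = 2*j - t1" using D jk t1' by auto
      moreover have "f t2 = g (2*j - t1)" using eq a by (simp add: h_def)
      moreover have "t2 < j" using calculation(1) a(1) t1' by arith
      ultimately show ?thesis using jmin[of t2] by simp
    qed
  qed simp
  have "[0..<Suc (2*j)] = 0 # [1..<Suc (2*j)]" using upt_conv_Cons[of 0 "Suc (2*j)"] by simp
  then have "hd L = f 0" by (simp add: L_def h_def del: upt_Suc)
  moreover have "last L = g 0" using j0 by (simp add: L_def h_def)
  moreover have "3 \<le> length L" using j0 by (simp add: L_def)
  moreover have "\<forall>z\<in>set L. d z a \<le> k" using dh by (auto simp: L_def)
  ultimately show ?thesis using walk dist by blast
qed

lemma bip: "E x b \<Longrightarrow> d x a \<noteq> d b a"
proof
  assume e: "E x b" and eq: "d x a = d b a"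
  obtain f where f: "f 0 = x" "\<forall>t\<le>d x a. d (f t) a = d x a - t" "\<forall>t<d x a. E (f t) (f (Suc t))"
    using geo_seq[of x a] by blast
  obtain g where g: "g 0 = b" "\<forall>t\<le>d b a. d (g t) a = d b a - t" "\<forall>t<d b a. E (g t) (g (Suc t))"
    using geo_seq[of b a] by blast
  have "x \<noteq> b" using e irr by metis
  have g': "\<forall>t\<le>d x a. d (g t) a = d x a - t" "\<forall>t<d x a. E (g t) (g (Suc t))" using g eq by simp_all
  obtain L where L: "is_walk E L" "distinct L" "hd L = x" "last L = b" "3 \<le> length L"
    using cyc[OF f(2) f(3) g'] f(1) g(1) \<open>x \<noteq> b\<close> by auto
  moreover have "E (last L) (hd L)" using e sym L by simp
  ultimately show False using acyc unfolding acyclic_graph_def by blast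
qed

lemma uniq_pred:
  assumes "E p b" "E q b" "d p a = k" "d q a = k" "d b a = Suc k"
  shows "p = q"
proof (rule ccontr)
  assume ne: "p \<noteq> q"
  obtain f where f: "f 0 = p" "\<forall>t\<le>d p a. d (f t) a = d p a - t" "\<forall>t<d p a. E (f t) (f (Suc t))"
    using geo_seq by blast
  obtain g where g: "g 0 = q" "\<forall>t\<le>d q a. d (g t) a = d q a - t" "\<forall>t<d q a. E (g t) (g (Suc t))"
    using geo_seq by blast
  have f': "\<forall>t\<le>k. d (f t) a = k - t" "\<forall>t<k. E (f t) (f (Suc t))" using f assms by auto
  have g': "\<forall>t\<le>k. d (g t) a = k - t" "\<forall>t<k. E (g t) (g (Suc t))" using g assms by auto
  obtain L where L: "is_walk E L" "distinct L" "hd L = p" "last L = q" "3 \<le> length L"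
      "\<forall>z\<in>set L. d z a \<le> k"
    using cyc[OF f' g'] f(1) g(1) ne by auto
  have "b \<notin> set L" using L(6) assms(5) by force
  have "L \<noteq> []" using L(5) by auto
  have "is_walk E (L @ [b])" using L assms(2) \<open>L \<noteq> []\<close> by (simp add: walk_snoc)
  moreover have "distinct (L @ [b])" using L(2) \<open>b \<notin> set L\<close> by simp
  moreover have "3 \<le> length (L @ [b])" using L(5) by simp
  moreover have "E (last (L @ [b])) (hd (L @ [b]))" using assms(1) sym L(3) \<open>L \<noteq> []\<close> by simp
  ultimately show False using acyc unfolding acyclic_graph_def by blast
qed

end



context tgraph begin

definition btw where "btw a w b \<longleftrightarrow> d a w + d w b = d a b"

lemma btw_sym: "btw a w b \<longleftrightarrow> btw b w a"
  unfolding btw_def by (simp add: gdist_sym[of a w] gdist_sym[of w b] gdist_sym[of a b] add.commute)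

lemma btw_triv1: "btw a a b" and btw_triv2: "btw a b b"
  unfolding btw_def by simp_all

lemma btw_self: "btw u w u \<Longrightarrow> w = u"
proof -
  assume "btw u w u"
  then have "d u w = 0" unfolding btw_def by simp
  then show "w = u" using gdist_0[of u w] by simp
qed

lemma edge_split: "E x b \<Longrightarrow> d u b = Suc (d u x) \<or> d u x = Suc (d u b)"
proof -
  assume e: "E x b"
  have "d x u \<noteq> d b u" using bip[OF e] .
  then have "d u x \<noteq> d u b" by (simp add: gdist_sym[of u x] gdist_sym[of u b])
  moreover have "d u b \<le> Suc (d u x)" using gdist_tri[of u b x] gdist_edge[OF e] by simp
  moreover have "d u x \<le> Suc (d u b)" using gdist_tri[of u x b] gdist_edge[OF sym[OF e]] by simp
  ultimately show ?thesis by linarith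
qed

lemma edge_d1: "E x b \<Longrightarrow> d x b = 1"
proof -
  assume e: "E x b"
  then have "x \<noteq> b" using irr by blast
  then have "d x b \<noteq> 0" using gdist_0[of x b] by simp
  then show ?thesis using gdist_edge[OF e] by simp
qed

lemma btw_T1:
  assumes bt: "btw a w b" and wb: "w \<noteq> b" and b': "b' \<in> cnbhd E b"
  shows "btw a w b'"
proof (cases "b' = b")
  case True then show ?thesis using bt by simp
next
  case False
  then have e: "E b b'" using b' by (auto simp: cnbhd_def)
  have tri1: "d a b' \<le> d a w + d w b'" using gdist_tri .
  from edge_split[OF e, of a] show ?thesis
  proof
    assume h: "d a b' = Suc (d a b)"
    have "d w b' \<le> Suc (d w b)" using gdist_tri[of w b' b] gdist_edge[OF e] by simp
    then show ?thesis using h bt tri1 unfolding btw_def by linarith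
  next
    assume h: "d a b = Suc (d a b')"
    have "d b w \<noteq> 0" using wb gdist_0[of b w] by auto
    then obtain k where k: "d b w = Suc k" using not0_implies_Suc by blast
    then obtain p where p: "E b p" "d p w = k" using gdist_step by blast
    have "d a p \<le> d a w + d w p" using gdist_tri .
    moreover have "d w p = k" using p by (simp add: gdist_sym[of w p])
    moreover have "d w b = Suc k" using k by (simp add: gdist_sym[of w b])
    moreover have "d a b \<le> Suc (d a p)" using gdist_tri[of a b p] gdist_edge[OF sym[OF p(1)]] by simp
    ultimately have "d a p = d a b'" using h bt unfolding btw_def by linarith
    then have dap: "d p a = d b' a" by (simp add: gdist_sym[of p a] gdist_sym[of b' a])
    have "d b a = Suc (d b' a)" using h by (simp add: gdist_sym[of b a] gdist_sym[of b' a])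
    then have "p = b'" using uniq_pred[OF sym[OF p(1)] sym[OF e] dap] by simp
    then show ?thesis using p \<open>d w b = Suc k\<close> h bt \<open>d w p = k\<close> unfolding btw_def by simp
  qed
qed

lemma btw_T4:
  assumes bt: "btw a p b" and e: "E p b" and x: "x \<in> cnbhd E b" and xp: "x \<noteq> p"
  shows "btw a b x"
proof (cases "x = b")
  case True then show ?thesis by (simp add: btw_def)
next
  case False
  then have ex: "E b x" using x by (auto simp: cnbhd_def)
  have dpb: "d p b = 1" using edge_d1[OF e] .
  from edge_split[OF ex, of a] show ?thesis
  proof
    assume "d a x = Suc (d a b)" then show ?thesis using edge_d1[OF ex] unfolding btw_def by simp
  next
    assume h: "d a b = Suc (d a x)"
    have "d a b = Suc (d a p)" using bt dpb unfolding btw_def by simp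
    then have "d p a = d a x" "d x a = d a x" "d b a = Suc (d a x)" using h
      by (simp_all add: gdist_sym[of p a] gdist_sym[of x a] gdist_sym[of b a])
    then have "x = p" using uniq_pred[OF sym[OF ex] e, of a "d a x"] by simp
    then show ?thesis using xp by simp
  qed
qed

end



lemma crle_iff: "crle E \<alpha> u v \<longleftrightarrow> ((\<forall>\<beta>. \<alpha> \<le> \<beta>) \<and> u = v) \<or>
   (\<not> (\<forall>\<beta>. \<alpha> \<le> \<beta>) \<and> (\<forall>x\<in>cnbhd E u. \<exists>y\<in>cnbhd E v. \<exists>\<beta><\<alpha>. crle E \<beta> x y))"
  by (subst crle.simps) blast

lemma crle_least: "(\<forall>\<beta>. \<alpha> \<le> \<beta>) \<Longrightarrow> crle E \<alpha> u v \<longleftrightarrow> u = v"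
  by (subst crle_iff) blast

lemma crle_nl: "\<not> (\<forall>\<beta>. \<alpha> \<le> \<beta>) \<Longrightarrow> crle E \<alpha> u v \<longleftrightarrow> (\<forall>x\<in>cnbhd E u. \<exists>y\<in>cnbhd E v. \<exists>\<beta><\<alpha>. crle E \<beta> x y)"
  by (subst crle_iff) blast

lemma nonleast: "(\<beta>::'o::wellorder) < \<alpha> \<Longrightarrow> \<not> (\<forall>\<gamma>. \<alpha> \<le> \<gamma>)"
  using leD by blast

lemma self_nbhd[simp]: "v \<in> cnbhd E v"
  by (simp add: cnbhd_def)

lemma crle_refl: "crle E (\<alpha>::'o::wellorder) u u"
proof (cases "\<forall>\<beta>. \<alpha> \<le> \<beta>")
  case True then show ?thesis by (simp add: crle_least)
next
  case False
  then obtain \<beta> where "\<beta> < \<alpha>" using not_le by blast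
  define m :: 'o where "m = (LEAST z. True)"
  have ml: "\<forall>\<gamma>. m \<le> \<gamma>" unfolding m_def by (simp add: Least_le)
  have mc: "crle E m x x" for x using ml by (simp add: crle_least)
  have "m < \<alpha>" using \<open>\<beta> < \<alpha>\<close> ml le_less_trans by blast
  then have "\<forall>x\<in>cnbhd E u. \<exists>y\<in>cnbhd E u. \<exists>\<beta><\<alpha>. crle E \<beta> x y" using mc by blast
  then show ?thesis using False by (subst crle_nl) simp_all
qed

lemma crle_neq_nl: "crle E (\<alpha>::'o::wellorder) u v \<Longrightarrow> u \<noteq> v \<Longrightarrow> \<not> (\<forall>\<beta>. \<alpha> \<le> \<beta>)"
proof
  assume "crle E \<alpha> u v" "u \<noteq> v" "\<forall>\<beta>. \<alpha> \<le> \<beta>"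
  then show False using crle_least[of \<alpha> E u v] by simp
qed

lemma crle_mono: "crle E (\<beta>::'o::wellorder) u v \<Longrightarrow> \<beta> \<le> \<alpha> \<Longrightarrow> crle E \<alpha> u v"
proof -
  assume c: "crle E \<beta> u v" and le: "\<beta> \<le> \<alpha>"
  show ?thesis
  proof (cases "\<beta> = \<alpha>")
    case True then show ?thesis using c by simp
  next
    case False
    then have lt: "\<beta> < \<alpha>" using le by simp
    then have nl: "\<not> (\<forall>\<gamma>. \<alpha> \<le> \<gamma>)" by (rule nonleast)
    show ?thesis
    proof (cases "\<forall>\<gamma>. \<beta> \<le> \<gamma>")
      case True
      then have "u = v" using c crle_least[of \<beta> E u v] by simp
      then show ?thesis using crle_refl[of E \<alpha> u] by simp
    next
      case False
      then have "\<forall>x\<in>cnbhd E u. \<exists>y\<in>cnbhd E v. \<exists>\<gamma><\<beta>. crle E \<gamma> x y" using c crle_nl[of \<beta> E u v] by simp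
      then have "\<forall>x\<in>cnbhd E u. \<exists>y\<in>cnbhd E v. \<exists>\<gamma><\<alpha>. crle E \<gamma> x y" using lt
        by (meson less_trans)
      then show ?thesis using nl crle_nl[of \<alpha> E u v] by simp
    qed
  qed
qed

lemma osucc_le: "(\<gamma>::'o::wellorder) < osucc z \<Longrightarrow> \<gamma> \<le> z"
proof (rule ccontr)
  assume a: "\<gamma> < osucc z" "\<not> \<gamma> \<le> z"
  then have "z < \<gamma>" by simp
  then have "osucc z \<le> \<gamma>" unfolding osucc_def by (rule Least_le)
  then show False using a by simp
qed

lemma osucc_gt: "(z::'o::wellorder) < w \<Longrightarrow> z < osucc z"
  unfolding osucc_def by (rule LeastI)

context tgraph begin

lemma crle_L: "crle E (\<alpha>::'o::wellorder) u v \<Longrightarrow> btw v w u \<Longrightarrow> crle E \<alpha> u w"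
proof (induction \<alpha> arbitrary: u v w rule: less_induct)
  case (less \<alpha>)
  show ?case
  proof (cases "\<forall>\<beta>. \<alpha> \<le> \<beta>")
    case True
    then have "u = v" using less.prems(1) crle_least[of \<alpha> E u v] by simp
    then have "w = u" using less.prems(2) btw_self by simp
    then show ?thesis using crle_refl[of E \<alpha> u] by simp
  next
    case nl: False
    have H: "\<forall>x\<in>cnbhd E u. \<exists>y\<in>cnbhd E v. \<exists>\<beta><\<alpha>. crle E \<beta> x y" using less.prems(1) by (simp add: crle_nl[OF nl])
    show ?thesis
    proof (cases "w = v")
      case True then show ?thesis using less.prems by simp
    next
      case wv: False
      show ?thesis
      proof (cases "w = u")
        case True
        have "\<forall>x\<in>cnbhd E u. \<exists>y\<in>cnbhd E w. \<exists>\<beta><\<alpha>. crle E \<beta> x y"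
        proof
          fix x assume "x \<in> cnbhd E u"
          then obtain y \<beta> where "\<beta> < \<alpha>" using H by blast
          moreover have "x \<in> cnbhd E w" using True \<open>x \<in> cnbhd E u\<close> by simp
          moreover have "crle E \<beta> x x" by (rule crle_refl)
          ultimately show "\<exists>y\<in>cnbhd E w. \<exists>\<beta><\<alpha>. crle E \<beta> x y" by blast
        qed
        then show ?thesis by (simp add: crle_nl[OF nl])
      next
        case wu: False
        show ?thesis unfolding crle_nl[OF nl]
        proof
          fix x assume x: "x \<in> cnbhd E u"
          then obtain y \<beta> where y: "y \<in> cnbhd E v" "\<beta> < \<alpha>" "crle E \<beta> x y" using H by blast
          have "btw v w x" using btw_T1[OF less.prems(2) wu x] .
          then have "btw x w v" using btw_sym by simp
          then have "btw x w y" using btw_T1[OF _ wv y(1)] by simp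
          then have "btw y w x" using btw_sym by simp
          then have "crle E \<beta> x w" using less.IH[OF y(2) y(3)] by simp
          then show "\<exists>y\<in>cnbhd E w. \<exists>\<beta><\<alpha>. crle E \<beta> x y" using y(2) by auto
        qed
      qed
    qed
  qed
qed

lemma crle_U: "crle E (\<alpha>::'o::wellorder) w v \<Longrightarrow> btw v w u \<Longrightarrow> w \<noteq> v \<Longrightarrow> crle E \<alpha> u v"
proof (induction \<alpha> arbitrary: u v w rule: less_induct)
  case (less \<alpha>)
  have nl: "\<not> (\<forall>\<beta>. \<alpha> \<le> \<beta>)" using crle_neq_nl[OF less.prems(1) less.prems(3)] .
  have H: "\<forall>x\<in>cnbhd E w. \<exists>y\<in>cnbhd E v. \<exists>\<beta><\<alpha>. crle E \<beta> x y" using less.prems(1) by (simp add: crle_nl[OF nl])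
  show ?case
  proof (cases "u = w")
    case True then show ?thesis using less.prems by simp
  next
    case uw: False
    have "d w u \<noteq> 0" using uw gdist_0[of w u] by auto
    then obtain k where k: "d w u = Suc k" using not0_implies_Suc by blast
    then obtain w' where w': "E w w'" "d w' u = k" using gdist_step by blast
    have dvw: "d v w \<noteq> 0" using less.prems(3) gdist_0[of v w] by auto
    have "d v w' \<le> d v w + d w w'" using gdist_tri .
    moreover have "d w w' = 1" using edge_d1[OF w'(1)] .
    moreover have "d v u \<le> d v w' + d w' u" using gdist_tri .
    ultimately have bt': "btw v w' u" and dvw': "d v w' = Suc (d v w)"
      using less.prems(2) k w'(2) unfolding btw_def by linarith+
    have w'n: "w' \<in> cnbhd E w" using w'(1) by (simp add: cnbhd_def)
    obtain y \<beta> where y: "y \<in> cnbhd E v" "\<beta> < \<alpha>" "crle E \<beta> w' y" using H w'n by blast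
    show ?thesis unfolding crle_nl[OF nl]
    proof
      fix x assume x: "x \<in> cnbhd E u"
      show "\<exists>y\<in>cnbhd E v. \<exists>\<beta><\<alpha>. crle E \<beta> x y"
      proof (cases "x = w")
        case True
        then show ?thesis using H by simp
      next
        case xw: False
        have "btw v w' x"
        proof (cases "w' = u")
          case True
          then show ?thesis using btw_T4[OF less.prems(2) _ x xw] w'(1) by simp
        next
          case False
          then show ?thesis using btw_T1[OF bt' False x] by simp
        qed
        then have "btw x w' v" using btw_sym by simp
        moreover have "w' \<noteq> v" using dvw' gdist_0[of v w'] by auto
        ultimately have "btw x w' y" using btw_T1[OF _ _ y(1)] by simp
        then have b2: "btw y w' x" using btw_sym by simp
        have "d v y \<le> 1" using y(1) gdist_edge[of v y] by (auto simp: cnbhd_def)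
        then have "w' \<noteq> y" using dvw' dvw by auto
        then have "crle E \<beta> x y" using less.IH[OF y(2) y(3) b2] by simp
        then show ?thesis using y by auto
      qed
    qed
  qed
qed

end



context tgraph begin

lemma crle_C2:
  assumes "\<forall>u. crle E (\<alpha>::'o::wellorder) u w" "w \<in> cnbhd E v" "\<alpha> < osucc \<alpha>"
  shows "\<forall>u. crle E (osucc \<alpha>) u v"
proof
  fix u
  have nl: "\<not> (\<forall>\<beta>. osucc \<alpha> \<le> \<beta>)" using nonleast[OF assms(3)] .
  have "\<forall>x\<in>cnbhd E u. \<exists>y\<in>cnbhd E v. \<exists>\<beta><osucc \<alpha>. crle E \<beta> x y"
    using assms by blast
  then show "crle E (osucc \<alpha>) u v" by (simp add: crle_nl[OF nl])
qed

lemma walk_prop: "is_walk E p \<Longrightarrow> S (last p) \<Longrightarrow> (\<And>a b. E a b \<Longrightarrow> S b \<Longrightarrow> S a) \<Longrightarrow> S (hd p)"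
proof (induction p)
  case Nil then show ?case by simp
next
  case (Cons a p)
  show ?case
  proof (cases "p = []")
    case True then show ?thesis using Cons by simp
  next
    case False
    then have "is_walk E p" "E a (hd p)" using Cons.prems(1) by (auto simp: walk_Cons)
    moreover have "last p = last (a # p)" using False by simp
    ultimately have "S (hd p)" using Cons by simp
    then show ?thesis using Cons.prems(3) \<open>E a (hd p)\<close> by simp
  qed
qed

lemma conn_prop: "S v0 \<Longrightarrow> (\<And>a b. E a b \<Longrightarrow> S b \<Longrightarrow> S a) \<Longrightarrow> S v"
proof -
  assume a: "S v0" "\<And>a b. E a b \<Longrightarrow> S b \<Longrightarrow> S a"
  obtain p where p: "is_walk E p" "hd p = v" "last p = v0"
    using conn unfolding connected_graph_def by blast
  show "S v" using walk_prop[of p S] p a by simp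
qed

lemma totality:
  assumes lt: "(\<alpha>::'o::wellorder) < osucc \<alpha>" and st: "crle E \<alpha> = crle E (osucc \<alpha>)"
    and cw: "cop_win E"
  shows "crle E \<alpha> u v"
proof -
  have nl: "\<not> (\<forall>\<beta>. osucc \<alpha> \<le> \<beta>)" using nonleast[OF lt] .
  have escape: "\<exists>x\<in>cnbhd E r. \<forall>y\<in>cnbhd E c. \<not> crle E \<alpha> x y" if nc: "\<not> crle E \<alpha> r c" for r c
  proof -
    have "\<not> crle E (osucc \<alpha>) r c" using nc st by simp
    then have "\<not> (\<forall>x\<in>cnbhd E r. \<exists>y\<in>cnbhd E c. \<exists>\<beta><osucc \<alpha>. crle E \<beta> x y)"
      by (simp add: crle_nl[OF nl])
    then obtain x where x: "x \<in> cnbhd E r" "\<forall>y\<in>cnbhd E c. \<not> (\<exists>\<beta><osucc \<alpha>. crle E \<beta> x y)"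
      by auto
    have "\<forall>y\<in>cnbhd E c. \<not> crle E \<alpha> x y"
    proof
      fix y assume "y \<in> cnbhd E c"
      then show "\<not> crle E \<alpha> x y" using x(2) lt by auto
    qed
    then show ?thesis using x(1) by auto
  qed
  obtain \<sigma> where sg: "\<forall>rs r. \<sigma> (rs @ [r]) \<in> cnbhd E (\<sigma> rs)"
    and win: "\<forall>r :: nat \<Rightarrow> 'a. (\<forall>i. r (Suc i) \<in> cnbhd E (r i)) \<longrightarrow>
        (\<exists>i. \<sigma> (map r [0..<i]) = r i \<or> \<sigma> (map r [0..<Suc i]) = r i)"
    using cw unfolding cop_win_def by blast
  show ?thesis
  proof (cases "\<forall>r. crle E \<alpha> r (\<sigma> [])")
    case True
    have "\<forall>u. crle E \<alpha> u v"
    proof (rule conn_prop[of "\<lambda>v. \<forall>u. crle E \<alpha> u v" "\<sigma> []"])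
      show "\<forall>u. crle E \<alpha> u (\<sigma> [])" using True .
    next
      fix a b assume e: "E a b" and h: "\<forall>u. crle E \<alpha> u b"
      have "b \<in> cnbhd E a" using e by (simp add: cnbhd_def)
      then have "\<forall>u. crle E (osucc \<alpha>) u a" using crle_C2[OF h _ lt] by blast
      then show "\<forall>u. crle E \<alpha> u a" using st by simp
    qed
    then show ?thesis by blast
  next
    case False
    define Good where "Good x c \<longleftrightarrow> (\<forall>y\<in>cnbhd E c. \<not> crle E \<alpha> x y)" for x c
    have gstep: "\<exists>x'\<in>cnbhd E x. Good x' c'" if "Good x c" "c' \<in> cnbhd E c" for x c c'
    proof -
      have "\<not> crle E \<alpha> x c'" using that unfolding Good_def by auto
      then show ?thesis using escape unfolding Good_def by simp
    qed
    obtain r0 where "\<not> crle E \<alpha> r0 (\<sigma> [])" using False by auto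
    then obtain x0 where x0: "Good x0 (\<sigma> [])" using escape[of r0 "\<sigma> []"] unfolding Good_def by auto
    define nxt where "nxt l = (SOME x'. x' \<in> cnbhd E (last l) \<and> Good x' (\<sigma> l))" for l
    define rl where "rl i = rec_nat [x0] (\<lambda>_ l. l @ [nxt l]) i" for i
    have rl0: "rl 0 = [x0]" and rlS: "rl (Suc i) = rl i @ [nxt (rl i)]" for i
      by (simp_all add: rl_def)
    define r where "r i = last (rl i)" for i
    have rlm: "rl i = map r [0..<Suc i]" for i
    proof (induction i)
      case 0 then show ?case by (simp add: rl0 r_def)
    next
      case (Suc i)
      have "r (Suc i) = nxt (rl i)" by (simp add: r_def rlS)
      then show ?case using Suc by (simp add: rlS del: upt_Suc) simp
    qed
    have inv: "Good (r i) (\<sigma> (map r [0..<i])) \<and> r (Suc i) \<in> cnbhd E (r i)" for i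
    proof (induction i)
      case 0
      have "Good (r 0) (\<sigma> [])" using x0 by (simp add: r_def rl0)
      moreover have "\<sigma> (rl 0) \<in> cnbhd E (\<sigma> [])" using sg[rule_format, of "[]" x0] by (simp add: rl0)
      ultimately have "\<exists>x'\<in>cnbhd E (r 0). Good x' (\<sigma> (rl 0))"
        using gstep by simp
      then have "\<exists>x'. x' \<in> cnbhd E (last (rl 0)) \<and> Good x' (\<sigma> (rl 0))"
        by (simp add: r_def Bex_def)
      then have "nxt (rl 0) \<in> cnbhd E (last (rl 0)) \<and> Good (nxt (rl 0)) (\<sigma> (rl 0))"
        unfolding nxt_def by (rule someI_ex)
      then show ?case using \<open>Good (r 0) (\<sigma> [])\<close> by (simp add: r_def rlS)
    next
      case (Suc i)
      have c: "\<sigma> (map r [0..<Suc i]) \<in> cnbhd E (\<sigma> (map r [0..<i]))"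
        using sg[rule_format, of "map r [0..<i]" "r i"] by simp
      have "\<exists>x'\<in>cnbhd E (r i). Good x' (\<sigma> (map r [0..<Suc i]))"
        using gstep[OF conjunct1[OF Suc] c] .
      then have "\<exists>x'. x' \<in> cnbhd E (last (rl i)) \<and> Good x' (\<sigma> (rl i))"
        using rlm[of i] by (simp add: r_def Bex_def del: upt_Suc)
      then have g1: "nxt (rl i) \<in> cnbhd E (last (rl i)) \<and> Good (nxt (rl i)) (\<sigma> (rl i))"
        unfolding nxt_def by (rule someI_ex)
      have rS: "r (Suc i) = nxt (rl i)" by (simp add: r_def rlS)
      have G: "Good (r (Suc i)) (\<sigma> (map r [0..<Suc i]))" using g1 rS rlm[of i] by simp
      have c2: "\<sigma> (map r [0..<Suc (Suc i)]) \<in> cnbhd E (\<sigma> (map r [0..<Suc i]))"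
        using sg[rule_format, of "map r [0..<Suc i]" "r (Suc i)"] by simp
      have "\<exists>x'\<in>cnbhd E (r (Suc i)). Good x' (\<sigma> (map r [0..<Suc (Suc i)]))"
        using gstep[OF G c2] .
      then have "\<exists>x'. x' \<in> cnbhd E (last (rl (Suc i))) \<and> Good x' (\<sigma> (rl (Suc i)))"
        using rlm[of "Suc i"] by (simp add: r_def Bex_def del: upt_Suc)
      then have "nxt (rl (Suc i)) \<in> cnbhd E (last (rl (Suc i))) \<and> Good (nxt (rl (Suc i))) (\<sigma> (rl (Suc i)))"
        unfolding nxt_def by (rule someI_ex)
      then have "r (Suc (Suc i)) \<in> cnbhd E (r (Suc i))" by (simp add: r_def rlS del: upt_Suc)
      then show ?case using G by simp
    qed
    then have "\<forall>i. r (Suc i) \<in> cnbhd E (r i)" by simp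
    then obtain i where i: "\<sigma> (map r [0..<i]) = r i \<or> \<sigma> (map r [0..<Suc i]) = r i"
      using win by auto
    have G: "Good (r i) (\<sigma> (map r [0..<i]))" using inv[of i] by simp
    have c: "\<sigma> (map r [0..<Suc i]) \<in> cnbhd E (\<sigma> (map r [0..<i]))"
      using sg[rule_format, of "map r [0..<i]" "r i"] by simp
    have "\<not> crle E \<alpha> (r i) (\<sigma> (map r [0..<i]))" using G unfolding Good_def by simp
    moreover have "\<not> crle E \<alpha> (r i) (\<sigma> (map r [0..<Suc i]))" using G c unfolding Good_def by simp
    ultimately show ?thesis using i crle_refl[of E \<alpha> "r i"] by auto
  qed
qed

end



lemma no_desc: "(\<forall>n. (f::nat \<Rightarrow> 'o::wellorder) (Suc n) < f n) \<Longrightarrow> False"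
proof -
  assume a: "\<forall>n. f (Suc n) < f n"
  have "(LEAST z. z \<in> range f) \<in> range f" by (rule LeastI[of _ "f 0"]) simp
  then obtain n where n: "f n = (LEAST z. z \<in> range f)" by auto
  have "f n \<le> f (Suc n)" unfolding n by (rule Least_le) simp
  then show False using a by (simp add: not_less[symmetric])
qed

locale main_ctx = tgraph E for E :: "'a \<Rightarrow> 'a \<Rightarrow> bool" +
  fixes \<alpha>0 :: "'o::wellorder"
  assumes cw: "cop_win E" and rad: "radius E = \<infinity>"
    and lt0: "\<alpha>0 < osucc \<alpha>0" and st0: "crle E \<alpha>0 = crle E (osucc \<alpha>0)"
begin

lemma tot0: "crle E \<alpha>0 u v"
  using totality[OF lt0 st0 cw] .

definition \<rho>0 :: 'o where "\<rho>0 = (LEAST \<alpha>. \<forall>u v. crle E \<alpha> u v)"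

lemma rho_tot: "crle E \<rho>0 u v"
proof -
  have "\<forall>u v. crle E \<rho>0 u v" unfolding \<rho>0_def by (rule LeastI[of _ \<alpha>0]) (simp add: tot0)
  then show ?thesis by simp
qed

lemma rho_le: "(\<forall>u v. crle E \<alpha> u v) \<Longrightarrow> \<rho>0 \<le> \<alpha>"
  unfolding \<rho>0_def by (rule Least_le)

definition \<eta> :: 'o where "\<eta> = eta_graph E"

lemma eta_vertex_tot: "crle E (eta_vertex E v :: 'o) u v"
proof -
  have "\<forall>u. crle E (eta_vertex E v :: 'o) u v" unfolding eta_vertex_def
    by (rule LeastI[of _ \<rho>0]) (simp add: rho_tot)
  then show ?thesis by simp
qed

lemma eta_le: "\<eta> \<le> eta_vertex E v"
  unfolding \<eta>_def eta_graph_def by (rule Least_le) simp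

lemma eta_ex: "\<exists>v0. \<eta> = eta_vertex E v0"
proof -
  have "\<eta> \<in> range (eta_vertex E)" unfolding \<eta>_def eta_graph_def
    by (rule LeastI[of _ "eta_vertex E undefined"]) simp
  then show ?thesis by auto
qed

lemma eta_vertex_le: "(\<forall>u. crle E \<alpha> u v) \<Longrightarrow> eta_vertex E v \<le> \<alpha>"
  unfolding eta_vertex_def by (rule Least_le)

lemma ecc: "\<exists>u. m < d u v"
proof (rule ccontr)
  assume "\<not> (\<exists>u. m < d u v)"
  then have "\<forall>u. d u v \<le> m" by (simp add: not_less)
  then have "\<forall>u. enat (d u v) \<le> enat m" by simp
  then have "(SUP u. enat (d u v)) \<le> enat m" by (auto intro: SUP_least)
  moreover have "radius E \<le> (SUP u. enat (d u v))" unfolding radius_def by (rule INF_lower) simp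
  ultimately show False using rad by simp
qed

definition H :: "'a \<Rightarrow> 'a \<Rightarrow> 'o" where "H x c = (LEAST \<alpha>. crle E \<alpha> x c)"

lemma H_crle: "crle E (H x c) x c"
  unfolding H_def by (rule LeastI[of _ \<rho>0]) (rule rho_tot)

lemma H_le: "crle E \<alpha> x c \<Longrightarrow> H x c \<le> \<alpha>"
  unfolding H_def by (rule Least_le)

lemma two_sided:
  assumes e: "E x b" and c1: "crle E (\<beta>1::'o) x b" and c2: "crle E \<beta>2 b x"
  shows "crle E (max \<beta>1 \<beta>2) u x"
proof -
  have xb: "x \<noteq> b" using e irr by auto
  have dbx: "d b x = 1" "d x b = 1" using edge_d1[OF sym[OF e]] edge_d1[OF e] by simp_all
  from edge_split[OF e, of u] show ?thesis
  proof
    assume h: "d u b = Suc (d u x)"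
    have "btw b x u" unfolding btw_def using h dbx by (simp add: gdist_sym[of b u] gdist_sym[of x u])
    then have "crle E \<beta>1 u x" using crle_L[OF crle_U[OF c1 _ xb]] by simp
    then show ?thesis using crle_mono by (metis max.cobounded1)
  next
    assume h: "d u x = Suc (d u b)"
    have "btw x b u" unfolding btw_def using h dbx by (simp add: gdist_sym[of b u] gdist_sym[of x u])
    then have "crle E \<beta>2 u x" using crle_U[OF c2 _ xb[symmetric]] by simp
    then show ?thesis using crle_mono by (metis max.cobounded2)
  qed
qed

lemma exist: "\<exists>x. \<forall>c \<beta>. c \<noteq> x \<longrightarrow> \<beta> < \<eta> \<longrightarrow> \<not> crle E \<beta> x c"
proof (rule ccontr)
  assume "\<not> ?thesis"
  then have bad0: "\<exists>c \<beta>. c \<noteq> x \<and> \<beta> < \<eta> \<and> crle E \<beta> x c" for x by auto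
  have bad: "\<exists>b. E x b \<and> (\<exists>\<beta>. \<beta> < \<eta> \<and> crle E \<beta> x b)" for x
  proof -
    obtain c \<beta> where c: "c \<noteq> x" "\<beta> < \<eta>" "crle E \<beta> x c" using bad0 by blast
    have "d x c \<noteq> 0" using c(1) gdist_0[of x c] by auto
    then obtain k where k: "d x c = Suc k" using not0_implies_Suc by blast
    then obtain b where b: "E x b" "d b c = k" using gdist_step by blast
    have "btw c b x" unfolding btw_def using k b edge_d1[OF sym[OF b(1)]]
      by (simp add: gdist_sym[of c b] gdist_sym[of c x])
    then have "crle E \<beta> x b" using crle_L[OF c(3)] by simp
    then show ?thesis using b(1) c(2) by blast
  qed
  define nb where "nb x = (SOME b. E x b \<and> (\<exists>\<beta>. \<beta> < \<eta> \<and> crle E \<beta> x b))" for x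
  have nbP: "E x (nb x) \<and> (\<exists>\<beta>. \<beta> < \<eta> \<and> crle E \<beta> x (nb x))" for x
    unfolding nb_def by (rule someI_ex) (rule bad)
  have noback: "nb (nb x) \<noteq> x" for x
  proof
    assume h: "nb (nb x) = x"
    obtain \<beta>1 where b1: "\<beta>1 < \<eta>" "crle E \<beta>1 x (nb x)" using nbP by blast
    obtain \<beta>2 where b2: "\<beta>2 < \<eta>" "crle E \<beta>2 (nb x) x" using nbP[of "nb x"] h by auto
    have "\<forall>u. crle E (max \<beta>1 \<beta>2) u x" using two_sided[OF conjunct1[OF nbP] b1(2) b2(2)] by blast
    then have "eta_vertex E x \<le> max \<beta>1 \<beta>2" by (rule eta_vertex_le)
    then have "\<eta> \<le> max \<beta>1 \<beta>2" using eta_le[of x] by (rule order_trans[rotated])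
    moreover have "max \<beta>1 \<beta>2 < \<eta>" using b1 b2 by simp
    ultimately show False by (auto simp: le_max_iff_disj not_le[symmetric])
  qed
  define s where "s n = (nb ^^ n) undefined" for n
  have sS: "s (Suc n) = nb (s n)" for n by (simp add: s_def)
  have desc: "H (s (Suc (Suc n))) (s (Suc n)) < H (s (Suc n)) (s n)" for n
  proof -
    define b where "b = s n"
    define x where "x = s (Suc n)"
    define y where "y = s (Suc (Suc n))"
    have ebx: "E b x" unfolding b_def x_def sS using nbP by blast
    have exy: "E x y" unfolding y_def x_def sS using nbP by blast
    have yb: "y \<noteq> b" unfolding y_def b_def sS using noback by blast
    have xb: "x \<noteq> b" using ebx irr by auto
    have c: "crle E (H x b) x b" by (rule H_crle)
    have nl: "\<not> (\<forall>\<beta>. H x b \<le> \<beta>)" using crle_neq_nl[OF c xb] .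
    have yn: "y \<in> cnbhd E x" using exy by (simp add: cnbhd_def)
    obtain y' \<beta> where y': "y' \<in> cnbhd E b" "\<beta> < H x b" "crle E \<beta> y y'"
      using c yn by (auto simp: crle_nl[OF nl])
    have "btw b x y" using btw_T4[OF btw_triv1 ebx yn yb] .
    then have "btw y x b" using btw_sym by simp
    then have "btw y x y'" using btw_T1[OF _ xb y'(1)] by simp
    then have "btw y' x y" using btw_sym by simp
    then have "crle E \<beta> y x" using crle_L[OF y'(3)] by simp
    then have "H y x \<le> \<beta>" by (rule H_le)
    then show ?thesis using y'(2) unfolding x_def y_def b_def by simp
  qed
  show False using no_desc[of "\<lambda>n. H (s (Suc n)) (s n)"] desc by simp
qed

end



context main_ctx begin

abbreviation e :: "nat \<Rightarrow> 'o" where "e k \<equiv> (osucc ^^ k) \<eta>"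

definition ltk :: "nat \<Rightarrow> 'o \<Rightarrow> bool" where
  "ltk k \<beta> \<longleftrightarrow> \<beta> < \<eta> \<or> (\<exists>j<k. \<beta> \<le> e j)"

lemma gdist_nbhd: "y \<in> cnbhd E v \<Longrightarrow> d v x \<le> Suc (d y x)"
  using gdist_nbr[of v y x] by (auto simp: cnbhd_def)

lemma Qlem:
  assumes x: "\<forall>c \<beta>. c \<noteq> x \<longrightarrow> \<beta> < \<eta> \<longrightarrow> \<not> crle E \<beta> x c"
  shows "d y x = k \<Longrightarrow> Suc k \<le> d c x \<Longrightarrow> ltk k \<beta> \<Longrightarrow> \<not> crle E \<beta> y c"
proof (induction k arbitrary: y c \<beta>)
  case 0
  then have "y = x" using gdist_0 by simp
  moreover have "c \<noteq> x" using 0 gdist_0[of c x] by auto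
  moreover have "\<beta> < \<eta>" using 0 by (simp add: ltk_def)
  ultimately show ?case using x by simp
next
  case (Suc k)
  show ?case
  proof
    assume c: "crle E \<beta> y c"
    have "y \<noteq> c" using Suc.prems by auto
    then have nl: "\<not> (\<forall>\<gamma>. \<beta> \<le> \<gamma>)" using crle_neq_nl[OF c] by simp
    obtain x' where x': "E y x'" "d x' x = k" using gdist_step Suc.prems(1) by blast
    have "x' \<in> cnbhd E y" using x' by (simp add: cnbhd_def)
    then obtain y' \<gamma> where y': "y' \<in> cnbhd E c" "\<gamma> < \<beta>" "crle E \<gamma> x' y'"
      using c by (auto simp: crle_nl[OF nl])
    have "Suc k \<le> d y' x" using gdist_nbhd[OF y'(1), of x] Suc.prems(2) by simp
    moreover have "ltk k \<gamma>"
    proof -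
      from Suc.prems(3) consider "\<beta> < \<eta>" | j where "j < Suc k" "\<beta> \<le> e j" unfolding ltk_def by blast
      then show ?thesis
      proof cases
        case 1 then show ?thesis using less_trans[OF y'(2) 1] unfolding ltk_def by simp
      next
        case 2
        show ?thesis
        proof (cases j)
          case 0 then have "\<gamma> < \<eta>" using 2 less_le_trans[OF y'(2)] by simp
          then show ?thesis unfolding ltk_def by simp
        next
          case (Suc j')
          then have "\<gamma> < osucc (e j')" using 2 y'(2) by simp
          then have "\<gamma> \<le> e j'" by (rule osucc_le)
          then show ?thesis using 2 Suc unfolding ltk_def by auto
        qed
      qed
    qed
    ultimately have "\<not> crle E \<gamma> x' y'" using Suc.IH[OF x'(2)] by simp
    then show False using y'(3) by simp
  qed
qed

lemma dist_all: "d c x = K \<Longrightarrow> j \<le> K \<Longrightarrow> \<exists>y. d y x = j"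
proof (induction K arbitrary: c)
  case 0 then show ?case by auto
next
  case (Suc K)
  show ?case
  proof (cases "j = Suc K")
    case True then show ?thesis using Suc by auto
  next
    case False
    obtain c' where "E c c'" "d c' x = K" using gdist_step Suc.prems(1) by blast
    then show ?thesis using Suc False by auto
  qed
qed

lemma nontot: "\<exists>u v. \<not> crle E (e n) u v"
proof -
  obtain x where x: "\<forall>c \<beta>. c \<noteq> x \<longrightarrow> \<beta> < \<eta> \<longrightarrow> \<not> crle E \<beta> x c" using exist by blast
  obtain c where c: "Suc n < d c x" using ecc by blast
  have "Suc n \<le> d c x" using c by simp
  then obtain y where y: "d y x = Suc n" using dist_all[of c x "d c x" "Suc n"] by auto
  have "ltk (Suc n) (e n)" unfolding ltk_def by auto
  then have "\<not> crle E (e n) y c" using Qlem[OF x y] c by simp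
  then show ?thesis by blast
qed

lemma e_lt: "e n < \<rho>0"
proof (rule ccontr)
  assume "\<not> e n < \<rho>0"
  then have "\<rho>0 \<le> e n" by simp
  then have "crle E (e n) u v" for u v using crle_mono[OF rho_tot] by simp
  then show False using nontot[of n] by simp
qed

lemma ub: "(\<forall>n. e n < \<gamma>) \<Longrightarrow> \<rho>0 \<le> \<gamma>"
proof -
  assume g: "\<forall>n. e n < \<gamma>"
  obtain v0 where v0: "\<eta> = eta_vertex E v0" using eta_ex by blast
  have S: "\<exists>k. \<forall>u. crle E (e k) u v" for v
  proof (rule conn_prop[of "\<lambda>v. \<exists>k. \<forall>u. crle E (e k) u v" v0])
    show "\<exists>k. \<forall>u. crle E (e k) u v0" using eta_vertex_tot v0 by (intro exI[of _ 0]) simp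
  next
    fix a b assume ab: "E a b" and h: "\<exists>k. \<forall>u. crle E (e k) u b"
    then obtain k where k: "\<forall>u. crle E (e k) u b" by blast
    have "e k < osucc (e k)" using osucc_gt[of "e k" \<gamma>] g by simp
    moreover have "b \<in> cnbhd E a" using ab by (simp add: cnbhd_def)
    ultimately have "\<forall>u. crle E (osucc (e k)) u a" using crle_C2[OF k] by simp
    then show "\<exists>k. \<forall>u. crle E (e k) u a" by (intro exI[of _ "Suc k"]) simp
  qed
  have "crle E \<gamma> u v" for u v
  proof -
    obtain k where "\<forall>u. crle E (e k) u v" using S by blast
    then have "crle E (e k) u v" by simp
    moreover have "e k \<le> \<gamma>" using less_imp_le[OF g[rule_format, of k]] .
    ultimately show ?thesis by (rule crle_mono)
  qed
  then show ?thesis using rho_le by simp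
qed

lemma omega_eq: "omega_add \<eta> = \<rho>0"
  unfolding omega_add_def
proof (rule Least_equality)
  show "\<forall>n. e n < \<rho>0" using e_lt by blast
next
  fix \<gamma> assume "\<forall>n. e n < \<gamma>" then show "\<rho>0 \<le> \<gamma>" by (rule ub)
qed

lemma cr_eq: "(cr_ordinal E :: 'o) = \<rho>0"
  unfolding cr_ordinal_def
proof (rule Least_equality)
  have "\<rho>0 \<le> \<alpha>0" using rho_le tot0 by simp
  then have "\<rho>0 < osucc \<alpha>0" using lt0 by simp
  then have "\<rho>0 < osucc \<rho>0" by (rule osucc_gt)
  moreover have "crle E \<rho>0 = crle E (osucc \<rho>0)"
  proof (intro ext)
    fix u v
    show "crle E \<rho>0 u v = crle E (osucc \<rho>0) u v"
      using rho_tot crle_mono[OF rho_tot less_imp_le[OF calculation]] by simp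
  qed
  ultimately show "\<rho>0 < osucc \<rho>0 \<and> crle E \<rho>0 = crle E (osucc \<rho>0)" by simp
next
  fix \<alpha> :: 'o assume h: "\<alpha> < osucc \<alpha> \<and> crle E \<alpha> = crle E (osucc \<alpha>)"
  have "crle E \<alpha> u v" for u v using totality[OF conjunct1[OF h] conjunct2[OF h] cw] .
  then have "\<forall>u v. crle E \<alpha> u v" by simp
  then show "\<rho>0 \<le> \<alpha>" by (rule rho_le)
qed

lemma dist_bound: "crle E (\<alpha>::'o) u v \<Longrightarrow> finite {\<beta>. \<beta> < \<alpha>} \<Longrightarrow> d u v \<le> card {\<beta>. \<beta> < \<alpha>}"
proof (induction \<alpha> arbitrary: v rule: less_induct)
  case (less \<alpha>)
  show ?case
  proof (cases "\<forall>\<beta>. \<alpha> \<le> \<beta>")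
    case True
    then have "u = v" using less.prems(1) crle_least[of \<alpha> E u v] by simp
    then show ?thesis by simp
  next
    case nl: False
    have H: "\<forall>x\<in>cnbhd E u. \<exists>y\<in>cnbhd E v. \<exists>\<beta><\<alpha>. crle E \<beta> x y"
      using less.prems(1) by (simp add: crle_nl[OF nl])
    have "\<exists>y\<in>cnbhd E v. \<exists>\<beta><\<alpha>. crle E \<beta> u y" using bspec[OF H self_nbhd] .
    then obtain y \<beta> where y: "y \<in> cnbhd E v" "\<beta> < \<alpha>" "crle E \<beta> u y" by blast
    have sub: "{\<gamma>. \<gamma> < \<beta>} \<subset> {\<gamma>. \<gamma> < \<alpha>}" using y(2) by auto
    then have fin: "finite {\<gamma>. \<gamma> < \<beta>}" using less.prems(2) finite_subset by auto
    have "card {\<gamma>. \<gamma> < \<beta>} < card {\<gamma>. \<gamma> < \<alpha>}" using psubset_card_mono[OF less.prems(2) sub] .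
    moreover have "d u y \<le> card {\<gamma>. \<gamma> < \<beta>}" using less.IH[OF y(2) y(3) fin] .
    moreover have "d u v \<le> Suc (d u y)"
    proof -
      have "d v u \<le> Suc (d y u)" using gdist_nbhd[OF y(1)] .
      then show ?thesis by (simp add: gdist_sym[of v u] gdist_sym[of y u])
    qed
    ultimately show ?thesis by linarith
  qed
qed

lemma eta_inf: "infinite {\<beta>. \<beta> < \<eta>}"
proof
  assume fin: "finite {\<beta>. \<beta> < \<eta>}"
  obtain v0 where v0: "\<eta> = eta_vertex E v0" using eta_ex by blast
  obtain u where u: "card {\<beta>. \<beta> < \<eta>} < d u v0" using ecc by blast
  have "crle E \<eta> u v0" using eta_vertex_tot v0 by simp
  then have "d u v0 \<le> card {\<beta>. \<beta> < \<eta>}" using dist_bound fin by simp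
  then show False using u by simp
qed

end

theorem lemma3p3:
  fixes T :: "'a \<Rightarrow> 'a \<Rightarrow> bool"
  assumes "tree T" and "cop_win T" and "radius T = \<infinity>"
    and "\<exists>\<alpha>::'o::wellorder. \<alpha> < osucc \<alpha> \<and> crle T \<alpha> = crle T (osucc \<alpha>)"
  shows "infinite {\<beta>. \<beta> < (eta_graph T :: 'o)} \<and> (cr_ordinal T :: 'o) = omega_add (eta_graph T)"
proof -
  obtain \<alpha>0 :: 'o where a: "\<alpha>0 < osucc \<alpha>0" "crle T \<alpha>0 = crle T (osucc \<alpha>0)" using assms(4) by blast
  have tg: "tgraph T" using assms(1) unfolding tree_def simple_graph_def tgraph_def by blast
  interpret m: main_ctx T \<alpha>0
    using tg assms(2,3) a unfolding main_ctx_def main_ctx_axioms_def by blast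
  show ?thesis using m.eta_inf m.omega_eq m.cr_eq unfolding m.\<eta>_def by simp
qed


end
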